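(* Let $n\ge1$ and suppose $N_c\ge 2n$ and $N_f\ge 2n$. With the mesonic polynomials $\mathcal O_\alpha$ ($\alpha\in S_{2n}$) defined below, $$\dim_{\mathbb C}\operatorname{span}\{\mathcal O_\alpha:\alpha\in S_{2n}\}=\frac1{|H|}\sum_{\gamma\in H}\sum_{\alpha\in S_{2n}}\delta(\gamma\alpha\gamma^{-1}\alpha^{-1})=\frac1{|H|}\sum_{\sigma\in S_{2n}}\sum_{\gamma\in S_{2n}}\delta(\gamma\sigma\gamma^{-1}\sigma^{-1})\,\delta(\Sigma_0\gamma\Sigma_0\gamma^{-1}),$$ i.e. it equals the number of orbits of $S_{2n}$ under conjugation by $H$.
   Context: $\Sigma_0=(1\,2)(3\,4)\cdots(2n-1\,2n)\in S_{2n}$, $H=S_n[S_2]=\{\gamma\in S_{2n}:\gamma\Sigma_0\gamma^{-1}=\Sigma_0\}$ (order $2^nn!$), and $\delta(g)=1$ if $g$ is the identity and $0$ otherwise. For $a=1,\dots,N_f$, $\Phi_a$ is an $N_c\times N_c$ matrix of commuting indeterminates (distinct for distinct $(a,i,j)$), and for $\alpha\in S_{2n}$, $\mathcal O_\alpha=\sum_{a_1,\dots,a_n=1}^{N_f}\sum_{i_1,\dots,i_{2n}=1}^{N_c}\prod_{k=1}^{2n}(\Phi_{c_k})_{i_k\,i_{\alpha(k)}}$ with $c_{2m-1}=c_{2m}=a_m$. *)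

theory Defs
  imports "HOL-Library.Poly_Mapping" "HOL-Combinatorics.Permutations" Complex_Main
begin

text \<open>Variables of the polynomial ring: triples (a,i,j) standing for the entry (Phi_a)_{ij},
  with 0-based indices a < N_f, i,j < N_c.\<close>
type_synonym var = "nat \<times> nat \<times> nat"
type_synonym cpoly = "(var \<Rightarrow>\<^sub>0 nat) \<Rightarrow>\<^sub>0 complex"

definition Xvar :: "var \<Rightarrow> cpoly" where
  "Xvar v = Poly_Mapping.single (Poly_Mapping.single v 1) 1"

definition cscale :: "complex \<Rightarrow> cpoly \<Rightarrow> cpoly" where
  "cscale c p = Poly_Mapping.map (\<lambda>x. c * x) p"

definition span_dim :: "cpoly set \<Rightarrow> nat" where
  "span_dim S = vector_space.dim cscale S"

text \<open>Symmetric group S_{2n} realised as permutations of {0..<2n} (0-based points).\<close>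
definition Sym :: "nat \<Rightarrow> (nat \<Rightarrow> nat) set" where
  "Sym m = {p. p permutes {0..<m}}"

text \<open>Sigma_0 = (1 2)(3 4)...(2n-1 2n), 0-based: (0 1)(2 3)...(2n-2 2n-1).\<close>
definition Sigma0 :: "nat \<Rightarrow> nat \<Rightarrow> nat" where
  "Sigma0 n k = (if k < 2*n then (if even k then k + 1 else k - 1) else k)"

definition Hgrp :: "nat \<Rightarrow> (nat \<Rightarrow> nat) set" where
  "Hgrp n = {g \<in> Sym (2*n). g \<circ> Sigma0 n \<circ> inv g = Sigma0 n}"

definition delta :: "(nat \<Rightarrow> nat) \<Rightarrow> real" where
  "delta g = (if g = id then 1 else 0)"

text \<open>Mesonic polynomial O_alpha; flavour map a : {0..<n} -> {0..<N_f}, colour map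
  i : {0..<2n} -> {0..<N_c}; c_k = a_(k div 2) (0-based version of c_{2m-1}=c_{2m}=a_m).\<close>
definition mesonic :: "nat \<Rightarrow> nat \<Rightarrow> nat \<Rightarrow> (nat \<Rightarrow> nat) \<Rightarrow> cpoly" where
  "mesonic n Nf Nc \<alpha> =
     (\<Sum>a \<in> PiE {0..<n} (\<lambda>_. {0..<Nf}).
       \<Sum>i \<in> PiE {0..<2*n} (\<lambda>_. {0..<Nc}).
         \<Prod>k<2*n. Xvar (a (k div 2), i k, i (\<alpha> k)))"

end

theory Submission
  imports Defs
begin
abbreviation lk where "lk \<equiv> Poly_Mapping.lookup"

lemma S0_S0: "Sigma0 n (Sigma0 n k) = k"
  unfolding Sigma0_def by (cases "k < 2*n"; cases "even k") (auto elim!: evenE oddE)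
lemma S0_lt: "k < 2*n \<Longrightarrow> Sigma0 n k < 2*n"
  unfolding Sigma0_def by (cases "even k") (auto elim!: evenE oddE)
lemma div_rep: "m < 2*n \<Longrightarrow> 2*(m div 2) = m \<or> 2*(m div 2) = Sigma0 n m"
  unfolding Sigma0_def by (cases "even m") (auto elim!: evenE oddE)
lemma S0_div: "Sigma0 n k div 2 = k div 2"
  unfolding Sigma0_def by (cases "k < 2*n"; cases "even k") (auto elim!: evenE oddE)
lemma S0_ne: "k < 2*n \<Longrightarrow> Sigma0 n k \<noteq> k"
  unfolding Sigma0_def by (cases "even k") (auto elim!: evenE oddE)
lemma pair_unique:
  assumes "x < 2*n" "y < 2*n" "x div 2 = y div 2" "x \<noteq> y"
  shows "y = Sigma0 n x"
  using assms unfolding Sigma0_def by (cases "even x"; cases "even y") (auto elim!: evenE oddE)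

lemma Sym_iff: "\<alpha> \<in> Sym m \<longleftrightarrow> \<alpha> permutes {0..<m}"
  by (simp add: Sym_def)

lemma finite_Sym: "finite (Sym m)"
  unfolding Sym_def by (simp add: finite_permutations)

lemma S0_out: "\<not> k < 2*n \<Longrightarrow> Sigma0 n k = k"
  unfolding Sigma0_def by auto

lemma S0_comp: "Sigma0 n \<circ> Sigma0 n = id"
  by (auto simp: S0_S0)

lemma S0_perm: "Sigma0 n permutes {0..<2*n}"
proof (rule bij_imp_permutes)
  have "bij (Sigma0 n)" using S0_comp o_bij by metis
  moreover have "Sigma0 n ` {0..<2*n} \<subseteq> {0..<2*n}" using S0_lt by auto
  moreover have "{0..<2*n} \<subseteq> Sigma0 n ` {0..<2*n}"
    using S0_lt S0_S0 by (metis atLeastLessThan_iff image_eqI subsetI zero_le)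
  ultimately show "bij_betw (Sigma0 n) {0..<2*n} {0..<2*n}"
    by (metis bij_betw_subset bij_betw_imp_surj_on subset_antisym subset_UNIV)
  show "\<And>x. x \<notin> {0..<2*n} \<Longrightarrow> Sigma0 n x = x" using S0_out by auto
qed

lemma H_iff: "\<gamma> \<in> Hgrp n \<longleftrightarrow> \<gamma> \<in> Sym (2*n) \<and> \<gamma> \<circ> Sigma0 n = Sigma0 n \<circ> \<gamma>"
proof (cases "\<gamma> \<in> Sym (2*n)")
  case True
  hence p: "\<gamma> permutes {0..<2*n}" by (simp add: Sym_iff)
  have 1: "inv \<gamma> \<circ> \<gamma> = id" "\<gamma> \<circ> inv \<gamma> = id" using permutes_inv_o[OF p] by auto
  show ?thesis
  proof
    assume "\<gamma> \<in> Hgrp n"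
    hence e: "\<gamma> \<circ> Sigma0 n \<circ> inv \<gamma> = Sigma0 n" by (simp add: Hgrp_def)
    have "\<gamma> \<circ> Sigma0 n = \<gamma> \<circ> Sigma0 n \<circ> (inv \<gamma> \<circ> \<gamma>)" using 1 by simp
    also have "\<dots> = Sigma0 n \<circ> \<gamma>" using e by (simp add: o_assoc)
    finally show "\<gamma> \<in> Sym (2*n) \<and> \<gamma> \<circ> Sigma0 n = Sigma0 n \<circ> \<gamma>" using True by simp
  next
    assume "\<gamma> \<in> Sym (2*n) \<and> \<gamma> \<circ> Sigma0 n = Sigma0 n \<circ> \<gamma>"
    hence "\<gamma> \<circ> Sigma0 n \<circ> inv \<gamma> = Sigma0 n \<circ> (\<gamma> \<circ> inv \<gamma>)" by (simp add: o_assoc)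
    thus "\<gamma> \<in> Hgrp n" using 1 True by (simp add: Hgrp_def)
  qed
qed (simp add: Hgrp_def)

lemma H_Sym: "\<gamma> \<in> Hgrp n \<Longrightarrow> \<gamma> \<in> Sym (2*n)"
  by (simp add: Hgrp_def)

lemma H_perm: "\<gamma> \<in> Hgrp n \<Longrightarrow> \<gamma> permutes {0..<2*n}"
  by (simp add: Hgrp_def Sym_iff)

lemma H_comm: "\<gamma> \<in> Hgrp n \<Longrightarrow> \<gamma> (Sigma0 n k) = Sigma0 n (\<gamma> k)"
  using H_iff by (metis comp_apply)

lemma H_id: "id \<in> Hgrp n"
  by (simp add: H_iff Sym_iff permutes_id)

lemma H_comp: "\<gamma> \<in> Hgrp n \<Longrightarrow> \<delta> \<in> Hgrp n \<Longrightarrow> \<gamma> \<circ> \<delta> \<in> Hgrp n"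
  unfolding H_iff Sym_iff by (metis (no_types, lifting) fun.map_comp permutes_compose)

lemma H_inv: "\<gamma> \<in> Hgrp n \<Longrightarrow> inv \<gamma> \<in> Hgrp n"
proof -
  assume g: "\<gamma> \<in> Hgrp n"
  hence p: "\<gamma> permutes {0..<2*n}" by (rule H_perm)
  have c: "\<gamma> \<circ> Sigma0 n = Sigma0 n \<circ> \<gamma>" using g H_iff by blast
  have 1: "inv \<gamma> \<circ> \<gamma> = id" "\<gamma> \<circ> inv \<gamma> = id" using permutes_inv_o[OF p] by auto
  have "inv \<gamma> \<circ> Sigma0 n = inv \<gamma> \<circ> Sigma0 n \<circ> (\<gamma> \<circ> inv \<gamma>)" using 1 by simp
  also have "\<dots> = inv \<gamma> \<circ> (\<gamma> \<circ> Sigma0 n) \<circ> inv \<gamma>" using c by (simp add: o_assoc)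
  also have "\<dots> = Sigma0 n \<circ> inv \<gamma>" using 1 by (simp add: o_assoc)
  finally show ?thesis using permutes_inv[OF p] by (simp add: H_iff Sym_iff)
qed

lemma finite_H: "finite (Hgrp n)"
  using finite_Sym[of "2*n"] by (rule rev_finite_subset) (auto simp: Hgrp_def)

lemma card_H_pos: "card (Hgrp n) > 0"
  using finite_H H_id by (metis card_gt_0_iff empty_iff)

definition orb :: "nat \<Rightarrow> (nat \<Rightarrow> nat) \<Rightarrow> (nat \<Rightarrow> nat) set" where
  "orb n \<alpha> = {\<gamma> \<circ> \<alpha> \<circ> inv \<gamma> | \<gamma>. \<gamma> \<in> Hgrp n}"

lemma conj_Sym: "\<gamma> \<in> Hgrp n \<Longrightarrow> \<alpha> \<in> Sym (2*n) \<Longrightarrow> \<gamma> \<circ> \<alpha> \<circ> inv \<gamma> \<in> Sym (2*n)"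
  unfolding Sym_iff using H_perm permutes_compose permutes_inv by blast

lemma orb_Sym: "\<alpha> \<in> Sym (2*n) \<Longrightarrow> orb n \<alpha> \<subseteq> Sym (2*n)"
  unfolding orb_def using conj_Sym by blast

lemma orb_self: "\<alpha> \<in> orb n \<alpha>"
  unfolding orb_def using H_id by force

lemma conj_conj:
  assumes "\<gamma> \<in> Hgrp n" "\<delta> \<in> Hgrp n"
  shows "\<delta> \<circ> (\<gamma> \<circ> \<alpha> \<circ> inv \<gamma>) \<circ> inv \<delta> = (\<delta> \<circ> \<gamma>) \<circ> \<alpha> \<circ> inv (\<delta> \<circ> \<gamma>)"
proof -
  have "bij \<gamma>" "bij \<delta>" using assms H_perm permutes_bij by blast+
  hence "inv (\<delta> \<circ> \<gamma>) = inv \<gamma> \<circ> inv \<delta>" by (simp add: o_inv_distrib)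
  thus ?thesis by (simp add: o_assoc)
qed

lemma orb_sub: "\<beta> \<in> orb n \<alpha> \<Longrightarrow> orb n \<beta> \<subseteq> orb n \<alpha>"
  unfolding orb_def using conj_conj H_comp by blast

lemma orb_symm: "\<beta> \<in> orb n \<alpha> \<Longrightarrow> \<alpha> \<in> orb n \<beta>"
proof -
  assume "\<beta> \<in> orb n \<alpha>"
  then obtain \<gamma> where g: "\<gamma> \<in> Hgrp n" and b: "\<beta> = \<gamma> \<circ> \<alpha> \<circ> inv \<gamma>" unfolding orb_def by blast
  have p: "\<gamma> permutes {0..<2*n}" using g H_perm by blast
  have 1: "inv \<gamma> \<circ> \<gamma> = id" "\<gamma> \<circ> inv \<gamma> = id" using permutes_inv_o[OF p] by auto
  have ii: "inv (inv \<gamma>) = \<gamma>" using p permutes_bij inv_inv_eq by blast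
  have "inv \<gamma> \<circ> \<beta> \<circ> inv (inv \<gamma>) = (inv \<gamma> \<circ> \<gamma>) \<circ> \<alpha> \<circ> (inv \<gamma> \<circ> \<gamma>)"
    using b ii by (simp add: o_assoc)
  also have "\<dots> = \<alpha>" using 1 by simp
  finally show ?thesis using H_inv[OF g] unfolding orb_def by blast
qed

lemma orb_eq: "\<beta> \<in> orb n \<alpha> \<Longrightarrow> orb n \<beta> = orb n \<alpha>"
  using orb_sub orb_symm by (metis subset_antisym)

lemma orb_eq_iff: "\<beta> \<in> orb n \<alpha> \<longleftrightarrow> orb n \<beta> = orb n \<alpha>"
  using orb_eq orb_self by blast

lemma finite_orb: assumes "\<alpha> \<in> Sym (2*n)" shows "finite (orb n \<alpha>)"
  using finite_subset[OF orb_Sym[OF assms] finite_Sym] .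

section \<open>Burnside counting\<close>

definition stab :: "nat \<Rightarrow> (nat \<Rightarrow> nat) \<Rightarrow> (nat \<Rightarrow> nat) set" where
  "stab n \<alpha> = {\<gamma> \<in> Hgrp n. \<gamma> \<circ> \<alpha> \<circ> inv \<gamma> = \<alpha>}"

lemma H_inv_o: "\<gamma> \<in> Hgrp n \<Longrightarrow> inv \<gamma> \<circ> \<gamma> = id \<and> \<gamma> \<circ> inv \<gamma> = id"
  using permutes_inv_o H_perm by blast

lemma H_inv_inv: "\<gamma> \<in> Hgrp n \<Longrightarrow> inv (inv \<gamma>) = \<gamma>"
  using H_perm permutes_bij inv_inv_eq by blast

lemma fiber_card:
  assumes g0: "\<gamma>0 \<in> Hgrp n"
  shows "card {\<gamma> \<in> Hgrp n. \<gamma> \<circ> \<alpha> \<circ> inv \<gamma> = \<gamma>0 \<circ> \<alpha> \<circ> inv \<gamma>0} = card (stab n \<alpha>)"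
proof -
  have i0: "inv \<gamma>0 \<circ> \<gamma>0 = id" "\<gamma>0 \<circ> inv \<gamma>0 = id" using H_inv_o[OF g0] by auto
  have "bij_betw (\<lambda>\<gamma>. \<gamma>0 \<circ> \<gamma>) (stab n \<alpha>) {\<gamma> \<in> Hgrp n. \<gamma> \<circ> \<alpha> \<circ> inv \<gamma> = \<gamma>0 \<circ> \<alpha> \<circ> inv \<gamma>0}"
  proof (rule bij_betw_byWitness[where f'="\<lambda>\<gamma>. inv \<gamma>0 \<circ> \<gamma>"])
    show "\<forall>a\<in>stab n \<alpha>. inv \<gamma>0 \<circ> (\<gamma>0 \<circ> a) = a" using i0 by (simp add: o_assoc)
    show "\<forall>a\<in>{\<gamma> \<in> Hgrp n. \<gamma> \<circ> \<alpha> \<circ> inv \<gamma> = \<gamma>0 \<circ> \<alpha> \<circ> inv \<gamma>0}. \<gamma>0 \<circ> (inv \<gamma>0 \<circ> a) = a"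
      using i0 by (simp add: o_assoc)
    show "(\<circ>) \<gamma>0 ` stab n \<alpha> \<subseteq> {\<gamma> \<in> Hgrp n. \<gamma> \<circ> \<alpha> \<circ> inv \<gamma> = \<gamma>0 \<circ> \<alpha> \<circ> inv \<gamma>0}"
    proof
      fix x assume "x \<in> (\<circ>) \<gamma>0 ` stab n \<alpha>"
      then obtain \<gamma> where gs: "\<gamma> \<in> stab n \<alpha>" and x: "x = \<gamma>0 \<circ> \<gamma>"
        by (rule imageE)
      have g: "\<gamma> \<in> Hgrp n" "\<gamma> \<circ> \<alpha> \<circ> inv \<gamma> = \<alpha>" using gs unfolding stab_def by simp_all
      have "x \<circ> \<alpha> \<circ> inv x = \<gamma>0 \<circ> (\<gamma> \<circ> \<alpha> \<circ> inv \<gamma>) \<circ> inv \<gamma>0"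
        using conj_conj[OF g(1) g0] x by simp
      hence "x \<circ> \<alpha> \<circ> inv x = \<gamma>0 \<circ> \<alpha> \<circ> inv \<gamma>0" using g(2) by simp
      moreover have "x \<in> Hgrp n" using H_comp[OF g0 g(1)] x by simp
      ultimately show "x \<in> {\<gamma> \<in> Hgrp n. \<gamma> \<circ> \<alpha> \<circ> inv \<gamma> = \<gamma>0 \<circ> \<alpha> \<circ> inv \<gamma>0}"
        by simp
    qed
    show "(\<circ>) (inv \<gamma>0) ` {\<gamma> \<in> Hgrp n. \<gamma> \<circ> \<alpha> \<circ> inv \<gamma> = \<gamma>0 \<circ> \<alpha> \<circ> inv \<gamma>0} \<subseteq> stab n \<alpha>"
    proof
      fix x assume "x \<in> (\<circ>) (inv \<gamma>0) ` {\<gamma> \<in> Hgrp n. \<gamma> \<circ> \<alpha> \<circ> inv \<gamma> = \<gamma>0 \<circ> \<alpha> \<circ> inv \<gamma>0}"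
      then obtain \<gamma> where gs: "\<gamma> \<in> {\<gamma> \<in> Hgrp n. \<gamma> \<circ> \<alpha> \<circ> inv \<gamma> = \<gamma>0 \<circ> \<alpha> \<circ> inv \<gamma>0}" and x: "x = inv \<gamma>0 \<circ> \<gamma>"
        by (rule imageE)
      have g: "\<gamma> \<in> Hgrp n" "\<gamma> \<circ> \<alpha> \<circ> inv \<gamma> = \<gamma>0 \<circ> \<alpha> \<circ> inv \<gamma>0" using gs by simp_all
      have "x \<circ> \<alpha> \<circ> inv x = inv \<gamma>0 \<circ> (\<gamma> \<circ> \<alpha> \<circ> inv \<gamma>) \<circ> inv (inv \<gamma>0)"
        using conj_conj[OF g(1) H_inv[OF g0]] x by simp
      also have "\<dots> = (inv \<gamma>0 \<circ> \<gamma>0) \<circ> \<alpha> \<circ> (inv \<gamma>0 \<circ> \<gamma>0)"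
        using g(2) H_inv_inv[OF g0] by (simp add: o_assoc)
      also have "\<dots> = \<alpha>" using i0 by simp
      moreover have "x \<in> Hgrp n" using H_comp[OF H_inv[OF g0] g(1)] x by simp
      ultimately show "x \<in> stab n \<alpha>" unfolding stab_def by simp
    qed
  qed
  from bij_betw_same_card[OF this] show ?thesis by simp
qed

lemma orbit_stab:
  shows "card (Hgrp n) = card (orb n \<alpha>) * card (stab n \<alpha>)"
proof -
  let ?c = "\<lambda>\<gamma>. \<gamma> \<circ> \<alpha> \<circ> inv \<gamma>"
  have img: "?c ` Hgrp n = orb n \<alpha>" unfolding orb_def by blast
  have "card (Hgrp n) = (\<Sum>\<gamma>\<in>Hgrp n. 1)" by simp
  also have "\<dots> = (\<Sum>\<beta>\<in>?c ` Hgrp n. \<Sum>\<gamma>\<in>{\<gamma>\<in>Hgrp n. ?c \<gamma> = \<beta>}. 1)"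
    using finite_H by (rule sum.image_gen)
  also have "\<dots> = (\<Sum>\<beta>\<in>orb n \<alpha>. card (stab n \<alpha>))"
  proof (rule sum.cong)
    fix \<beta> assume "\<beta> \<in> orb n \<alpha>"
    hence "\<beta> \<in> ?c ` Hgrp n" using img by simp
    then obtain \<gamma>0 where "\<gamma>0 \<in> Hgrp n" "\<beta> = ?c \<gamma>0" by blast
    thus "(\<Sum>\<gamma>\<in>{\<gamma>\<in>Hgrp n. ?c \<gamma> = \<beta>}. 1) = card (stab n \<alpha>)"
      using fiber_card by simp
  qed (rule img)
  also have "\<dots> = card (orb n \<alpha>) * card (stab n \<alpha>)" by simp
  finally show ?thesis .
qed

lemma delta_conj:
  assumes "\<alpha> \<in> Sym (2*n)"
  shows "delta (\<gamma> \<circ> \<alpha> \<circ> inv \<gamma> \<circ> inv \<alpha>) = (if \<gamma> \<circ> \<alpha> \<circ> inv \<gamma> = \<alpha> then 1 else 0)"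
proof -
  have p: "\<alpha> permutes {0..<2*n}" using assms Sym_iff by blast
  have 1: "inv \<alpha> \<circ> \<alpha> = id" "\<alpha> \<circ> inv \<alpha> = id" using permutes_inv_o[OF p] by auto
  have "(\<gamma> \<circ> \<alpha> \<circ> inv \<gamma> \<circ> inv \<alpha> = id) \<longleftrightarrow> (\<gamma> \<circ> \<alpha> \<circ> inv \<gamma> = \<alpha>)"
  proof
    assume "\<gamma> \<circ> \<alpha> \<circ> inv \<gamma> \<circ> inv \<alpha> = id"
    hence "\<gamma> \<circ> \<alpha> \<circ> inv \<gamma> \<circ> (inv \<alpha> \<circ> \<alpha>) = \<alpha>" by (simp add: o_assoc)
    thus "\<gamma> \<circ> \<alpha> \<circ> inv \<gamma> = \<alpha>" using 1 by simp
  next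
    assume "\<gamma> \<circ> \<alpha> \<circ> inv \<gamma> = \<alpha>"
    thus "\<gamma> \<circ> \<alpha> \<circ> inv \<gamma> \<circ> inv \<alpha> = id" using 1 by simp
  qed
  thus ?thesis by (simp add: delta_def)
qed

lemma sum_inv_orb:
  "(\<Sum>\<alpha>\<in>Sym (2*n). 1 / real (card (orb n \<alpha>))) = real (card (orb n ` Sym (2*n)))"
proof -
  have "(\<Sum>\<alpha>\<in>Sym (2*n). 1 / real (card (orb n \<alpha>))) =
        (\<Sum>Ob\<in>orb n ` Sym (2*n). \<Sum>\<alpha>\<in>{\<alpha>\<in>Sym (2*n). orb n \<alpha> = Ob}. 1 / real (card (orb n \<alpha>)))"
    using finite_Sym by (rule sum.image_gen)
  also have "\<dots> = (\<Sum>Ob\<in>orb n ` Sym (2*n). 1)"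
  proof (rule sum.cong)
    fix Ob assume "Ob \<in> orb n ` Sym (2*n)"
    then obtain \<beta> where b: "\<beta> \<in> Sym (2*n)" "Ob = orb n \<beta>" by blast
    have s: "{\<alpha>\<in>Sym (2*n). orb n \<alpha> = Ob} = Ob"
      using b orb_eq_iff orb_Sym by blast
    have fo: "finite Ob" "Ob \<noteq> {}" using b finite_orb orb_self by blast+
    have "(\<Sum>\<alpha>\<in>{\<alpha>\<in>Sym (2*n). orb n \<alpha> = Ob}. 1 / real (card (orb n \<alpha>))) = (\<Sum>\<alpha>\<in>Ob. 1 / real (card Ob))"
      by (rule sum.cong) (use s in auto)
    also have "\<dots> = 1" using fo by simp
    finally show "(\<Sum>\<alpha>\<in>{\<alpha>\<in>Sym (2*n). orb n \<alpha> = Ob}. 1 / real (card (orb n \<alpha>))) = 1" .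
  qed simp
  finally show ?thesis by simp
qed

lemma burnside:
  "(1 / real (card (Hgrp n))) * (\<Sum>\<gamma>\<in>Hgrp n. \<Sum>\<alpha>\<in>Sym (2*n). delta (\<gamma> \<circ> \<alpha> \<circ> inv \<gamma> \<circ> inv \<alpha>))
     = real (card (orb n ` Sym (2*n)))"
proof -
  have h0: "real (card (Hgrp n)) > 0" using card_H_pos by simp
  have "(\<Sum>\<gamma>\<in>Hgrp n. \<Sum>\<alpha>\<in>Sym (2*n). delta (\<gamma> \<circ> \<alpha> \<circ> inv \<gamma> \<circ> inv \<alpha>))
      = (\<Sum>\<alpha>\<in>Sym (2*n). \<Sum>\<gamma>\<in>Hgrp n. delta (\<gamma> \<circ> \<alpha> \<circ> inv \<gamma> \<circ> inv \<alpha>))"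
    by (rule sum.swap)
  also have "\<dots> = (\<Sum>\<alpha>\<in>Sym (2*n). real (card (stab n \<alpha>)))"
  proof (rule sum.cong)
    fix \<alpha> assume a: "\<alpha> \<in> Sym (2*n)"
    have "(\<Sum>\<gamma>\<in>Hgrp n. delta (\<gamma> \<circ> \<alpha> \<circ> inv \<gamma> \<circ> inv \<alpha>))
        = (\<Sum>\<gamma>\<in>Hgrp n. if \<gamma> \<circ> \<alpha> \<circ> inv \<gamma> = \<alpha> then 1 else 0)"
      using delta_conj[OF a] by simp
    also have "\<dots> = real (card (stab n \<alpha>))"
      unfolding stab_def using finite_H by (simp add: sum.If_cases Int_def)
    finally show "(\<Sum>\<gamma>\<in>Hgrp n. delta (\<gamma> \<circ> \<alpha> \<circ> inv \<gamma> \<circ> inv \<alpha>)) = real (card (stab n \<alpha>))" .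
  qed simp
  also have "\<dots> = (\<Sum>\<alpha>\<in>Sym (2*n). real (card (Hgrp n)) * (1 / real (card (orb n \<alpha>))))"
  proof (rule sum.cong)
    fix \<alpha> assume a: "\<alpha> \<in> Sym (2*n)"
    have "card (orb n \<alpha>) > 0" using finite_orb[OF a] orb_self by (metis card_gt_0_iff empty_iff)
    thus "real (card (stab n \<alpha>)) = real (card (Hgrp n)) * (1 / real (card (orb n \<alpha>)))"
      using orbit_stab[of n \<alpha>] by (simp add: field_simps)
  qed simp
  also have "\<dots> = real (card (Hgrp n)) * real (card (orb n ` Sym (2*n)))"
    by (simp only: sum_distrib_left[symmetric] sum_inv_orb)
  finally show ?thesis using h0 by simp
qed

lemma second_eq:
  "(1 / real (card (Hgrp n))) * (\<Sum>\<gamma>\<in>Hgrp n. \<Sum>\<alpha>\<in>Sym (2*n). delta (\<gamma> \<circ> \<alpha> \<circ> inv \<gamma> \<circ> inv \<alpha>))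
   = (1 / real (card (Hgrp n))) *
       (\<Sum>\<sigma>\<in>Sym (2*n). \<Sum>\<gamma>\<in>Sym (2*n).
          delta (\<gamma> \<circ> \<sigma> \<circ> inv \<gamma> \<circ> inv \<sigma>) * delta (Sigma0 n \<circ> \<gamma> \<circ> Sigma0 n \<circ> inv \<gamma>))"
proof -
  have dH: "delta (Sigma0 n \<circ> \<gamma> \<circ> Sigma0 n \<circ> inv \<gamma>) = (if \<gamma> \<in> Hgrp n then 1 else 0)"
    if g: "\<gamma> \<in> Sym (2*n)" for \<gamma>
  proof -
    have "(Sigma0 n \<circ> \<gamma> \<circ> Sigma0 n \<circ> inv \<gamma> = id) \<longleftrightarrow> (\<gamma> \<circ> Sigma0 n \<circ> inv \<gamma> = Sigma0 n)"
    proof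
      assume "Sigma0 n \<circ> \<gamma> \<circ> Sigma0 n \<circ> inv \<gamma> = id"
      hence "Sigma0 n \<circ> (Sigma0 n \<circ> \<gamma> \<circ> Sigma0 n \<circ> inv \<gamma>) = Sigma0 n" by simp
      thus "\<gamma> \<circ> Sigma0 n \<circ> inv \<gamma> = Sigma0 n" by (simp add: o_assoc S0_comp)
    next
      assume "\<gamma> \<circ> Sigma0 n \<circ> inv \<gamma> = Sigma0 n"
      hence "Sigma0 n \<circ> (\<gamma> \<circ> Sigma0 n \<circ> inv \<gamma>) = id" by (simp add: S0_comp)
      thus "Sigma0 n \<circ> \<gamma> \<circ> Sigma0 n \<circ> inv \<gamma> = id" by (simp add: o_assoc)
    qed
    thus ?thesis using g by (simp add: delta_def Hgrp_def)
  qed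
  have "(\<Sum>\<sigma>\<in>Sym (2*n). \<Sum>\<gamma>\<in>Sym (2*n).
          delta (\<gamma> \<circ> \<sigma> \<circ> inv \<gamma> \<circ> inv \<sigma>) * delta (Sigma0 n \<circ> \<gamma> \<circ> Sigma0 n \<circ> inv \<gamma>))
      = (\<Sum>\<sigma>\<in>Sym (2*n). \<Sum>\<gamma>\<in>Hgrp n. delta (\<gamma> \<circ> \<sigma> \<circ> inv \<gamma> \<circ> inv \<sigma>))"
  proof (rule sum.cong)
    fix \<sigma> assume "\<sigma> \<in> Sym (2*n)"
    have "(\<Sum>\<gamma>\<in>Sym (2*n). delta (\<gamma> \<circ> \<sigma> \<circ> inv \<gamma> \<circ> inv \<sigma>) * delta (Sigma0 n \<circ> \<gamma> \<circ> Sigma0 n \<circ> inv \<gamma>))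
        = (\<Sum>\<gamma>\<in>Sym (2*n). if \<gamma> \<in> Hgrp n then delta (\<gamma> \<circ> \<sigma> \<circ> inv \<gamma> \<circ> inv \<sigma>) else 0)"
      by (rule sum.cong) (simp_all add: dH)
    also have "\<dots> = (\<Sum>\<gamma>\<in>{\<gamma>\<in>Sym (2*n). \<gamma> \<in> Hgrp n}. delta (\<gamma> \<circ> \<sigma> \<circ> inv \<gamma> \<circ> inv \<sigma>))"
      using finite_Sym by (simp add: sum.inter_filter)
    also have "{\<gamma>\<in>Sym (2*n). \<gamma> \<in> Hgrp n} = Hgrp n" using H_Sym by blast
    finally show "(\<Sum>\<gamma>\<in>Sym (2*n). delta (\<gamma> \<circ> \<sigma> \<circ> inv \<gamma> \<circ> inv \<sigma>) * delta (Sigma0 n \<circ> \<gamma> \<circ> Sigma0 n \<circ> inv \<gamma>))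
        = (\<Sum>\<gamma>\<in>Hgrp n. delta (\<gamma> \<circ> \<sigma> \<circ> inv \<gamma> \<circ> inv \<sigma>))" .
  qed simp
  also have "\<dots> = (\<Sum>\<gamma>\<in>Hgrp n. \<Sum>\<sigma>\<in>Sym (2*n). delta (\<gamma> \<circ> \<sigma> \<circ> inv \<gamma> \<circ> inv \<sigma>))"
    by (rule sum.swap)
  finally show ?thesis by simp
qed

lemma lookup_cscale[simp]: "lk (cscale c p) k = c * lk p k"
  by (simp add: cscale_def Poly_Mapping.map.rep_eq when_def)

interpretation cs: vector_space cscale
proof
  fix a :: complex and x y :: cpoly
  show "cscale a (x + y) = cscale a x + cscale a y"
    by (rule poly_mapping_eqI) (simp add: lookup_add distrib_left)
next
  fix a b :: complex and x :: cpoly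
  show "cscale (a + b) x = cscale a x + cscale b x"
    by (rule poly_mapping_eqI) (simp add: lookup_add distrib_right)
next
  fix a b :: complex and x :: cpoly
  show "cscale a (cscale b x) = cscale (a * b) x"
    by (rule poly_mapping_eqI) simp
next
  fix x :: cpoly
  show "cscale 1 x = x"
    by (rule poly_mapping_eqI) simp
qed

lemma prod_Xvar: "finite A \<Longrightarrow> (\<Prod>k\<in>A. Xvar (f k)) = Poly_Mapping.single (\<Sum>k\<in>A. Poly_Mapping.single (f k) 1) 1"
  by (induction A rule: finite_induct) (auto simp: Xvar_def mult_single)

definition AF :: "nat \<Rightarrow> nat \<Rightarrow> (nat \<Rightarrow> nat) set" where
  "AF n Nf = PiE {0..<n} (\<lambda>_. {0..<Nf})"
definition IC :: "nat \<Rightarrow> nat \<Rightarrow> (nat \<Rightarrow> nat) set" where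
  "IC n Nc = PiE {0..<2*n} (\<lambda>_. {0..<Nc})"

definition Mon :: "nat \<Rightarrow> (nat \<Rightarrow> nat) \<Rightarrow> (nat \<Rightarrow> nat) \<Rightarrow> (nat \<Rightarrow> nat) \<Rightarrow> (var \<Rightarrow>\<^sub>0 nat)" where
  "Mon n \<beta> a i = (\<Sum>k<2*n. Poly_Mapping.single (a (k div 2), i k, i (\<beta> k)) 1)"

definition Pm :: "nat \<Rightarrow> (nat \<Rightarrow> nat) \<Rightarrow> (nat \<Rightarrow> nat) \<Rightarrow> (nat \<Rightarrow> nat) \<Rightarrow> cpoly" where
  "Pm n \<beta> a i = (\<Prod>k<2*n. Xvar (a (k div 2), i k, i (\<beta> k)))"

lemma mesonic_Pm: "mesonic n Nf Nc \<beta> = (\<Sum>a\<in>AF n Nf. \<Sum>i\<in>IC n Nc. Pm n \<beta> a i)"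
  by (simp add: mesonic_def Pm_def AF_def IC_def)

lemma Pm_Mon: "Pm n \<beta> a i = Poly_Mapping.single (Mon n \<beta> a i) 1"
  unfolding Pm_def Mon_def by (rule prod_Xvar) simp

lemma finite_AF: "finite (AF n Nf)" by (simp add: AF_def finite_PiE)
lemma finite_IC: "finite (IC n Nc)" by (simp add: IC_def finite_PiE)

lemma lk_mesonic:
  "lk (mesonic n Nf Nc \<beta>) m = of_nat (\<Sum>a\<in>AF n Nf. \<Sum>i\<in>IC n Nc. if Mon n \<beta> a i = m then 1 else (0::nat))"
  by (simp add: mesonic_Pm Pm_Mon lookup_sum lookup_single when_def of_nat_sum) (auto intro!: sum.cong)

lemma lk_mesonic_nz:
  "lk (mesonic n Nf Nc \<beta>) m \<noteq> 0 \<longleftrightarrow> (\<exists>a\<in>AF n Nf. \<exists>i\<in>IC n Nc. Mon n \<beta> a i = m)"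
  unfolding lk_mesonic of_nat_eq_0_iff using finite_AF finite_IC
  by (simp add: sum_eq_0_iff)

lemma lk_sum_single_nz:
  "finite K \<Longrightarrow> (lk (\<Sum>k\<in>K. Poly_Mapping.single (g k) (1::nat)) v \<noteq> 0) \<longleftrightarrow> (\<exists>k\<in>K. g k = v)"
  by (simp add: lookup_sum lookup_single when_def sum_eq_0_iff)

section \<open>Monomials determine orbits\<close>

definition Rm :: "nat \<Rightarrow> (nat \<Rightarrow> nat) \<Rightarrow> (var \<Rightarrow>\<^sub>0 nat)" where
  "Rm n \<alpha> = (\<Sum>k<2*n. Poly_Mapping.single (k div 2, k, \<alpha> k) 1)"

lemma mon_orb:
  assumes a: "\<alpha> \<in> Sym (2*n)" and b: "\<beta> \<in> Sym (2*n)"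
    and eq: "Mon n \<beta> a i = Rm n \<alpha>"
  shows "\<beta> \<in> orb n \<alpha>"
proof -
  have pa: "\<alpha> permutes {0..<2*n}" and pb: "\<beta> permutes {0..<2*n}" using a b Sym_iff by auto
  have A: "i k < 2*n \<and> a (k div 2) = i k div 2 \<and> i (\<beta> k) = \<alpha> (i k)" if k: "k < 2*n" for k
  proof -
    have "lk (Mon n \<beta> a i) (a (k div 2), i k, i (\<beta> k)) \<noteq> 0"
      unfolding Mon_def using k by (subst lk_sum_single_nz) auto
    hence "lk (Rm n \<alpha>) (a (k div 2), i k, i (\<beta> k)) \<noteq> 0" using eq by simp
    then obtain k' where "k' < 2*n" "(k' div 2, k', \<alpha> k') = (a (k div 2), i k, i (\<beta> k))"
      unfolding Rm_def by (subst (asm) lk_sum_single_nz) auto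
    thus ?thesis by auto
  qed
  have B: "\<exists>k<2*n. i k = k'" if k': "k' < 2*n" for k'
  proof -
    have "lk (Rm n \<alpha>) (k' div 2, k', \<alpha> k') \<noteq> 0"
      unfolding Rm_def using k' by (subst lk_sum_single_nz) auto
    hence "lk (Mon n \<beta> a i) (k' div 2, k', \<alpha> k') \<noteq> 0" using eq by simp
    then obtain k where "k < 2*n" "(a (k div 2), i k, i (\<beta> k)) = (k' div 2, k', \<alpha> k')"
      unfolding Mon_def by (subst (asm) lk_sum_single_nz) auto
    thus ?thesis by auto
  qed
  have img: "i ` {0..<2*n} = {0..<2*n}"
    using A B by (auto simp: image_iff) (metis atLeastLessThan_iff zero_le)
  have inj: "inj_on i {0..<2*n}"
    using img by (simp add: inj_on_iff_eq_card)
  define \<gamma> where "\<gamma> k = (if k < 2*n then i k else k)" for k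
  have gi: "k < 2*n \<Longrightarrow> \<gamma> k = i k" for k by (simp add: \<gamma>_def)
  have bg: "bij_betw \<gamma> {0..<2*n} {0..<2*n}"
    unfolding bij_betw_def
  proof
    show "inj_on \<gamma> {0..<2*n}" using inj by (rule inj_on_cong[THEN iffD1, rotated]) (simp add: gi)
    show "\<gamma> ` {0..<2*n} = {0..<2*n}" using img by (metis atLeastLessThan_iff gi image_cong)
  qed
  have pg: "\<gamma> permutes {0..<2*n}"
    by (rule bij_imp_permutes[OF bg]) (simp add: \<gamma>_def)
  have comm: "\<gamma> \<circ> Sigma0 n = Sigma0 n \<circ> \<gamma>"
  proof
    fix k
    show "(\<gamma> \<circ> Sigma0 n) k = (Sigma0 n \<circ> \<gamma>) k"
    proof (cases "k < 2*n")
      case True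
      have s: "Sigma0 n k < 2*n" "Sigma0 n k \<noteq> k" using True S0_lt S0_ne by auto
      have "i (Sigma0 n k) = Sigma0 n (i k)"
      proof (rule pair_unique)
        show "i k < 2*n" "i (Sigma0 n k) < 2*n" using A True s by auto
        show "i k div 2 = i (Sigma0 n k) div 2" using A[OF True] A[OF s(1)] S0_div by metis
        show "i k \<noteq> i (Sigma0 n k)" using inj s True by (metis atLeastLessThan_iff inj_on_eq_iff zero_le)
      qed
      thus ?thesis using True s by (simp add: gi)
    next
      case False
      thus ?thesis by (simp add: \<gamma>_def S0_out)
    qed
  qed
  have gH: "\<gamma> \<in> Hgrp n" using pg comm by (simp add: H_iff Sym_iff)
  have gb: "\<gamma> \<circ> \<beta> = \<alpha> \<circ> \<gamma>"
  proof
    fix k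
    show "(\<gamma> \<circ> \<beta>) k = (\<alpha> \<circ> \<gamma>) k"
    proof (cases "k < 2*n")
      case True
      have "\<beta> k < 2*n" using pb True by (metis atLeastLessThan_iff permutes_in_image zero_le)
      thus ?thesis using True A by (simp add: gi)
    next
      case False
      thus ?thesis using pa pb by (simp add: \<gamma>_def permutes_not_in)
    qed
  qed
  have 1: "inv \<gamma> \<circ> \<gamma> = id" using H_inv_o[OF gH] by auto
  have "inv \<gamma> \<circ> \<alpha> \<circ> inv (inv \<gamma>) = inv \<gamma> \<circ> \<alpha> \<circ> \<gamma>" using H_inv_inv[OF gH] by simp
  also have "\<dots> = inv \<gamma> \<circ> \<gamma> \<circ> \<beta>" using gb by (metis comp_assoc)
  also have "\<dots> = \<beta>" using 1 by simp
  finally show ?thesis using H_inv[OF gH] unfolding orb_def by blast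
qed

lemma mon_witness:
  assumes "n \<le> Nf" "2*n \<le> Nc" "\<alpha> \<in> Sym (2*n)"
  shows "lk (mesonic n Nf Nc \<alpha>) (Rm n \<alpha>) \<noteq> 0"
proof -
  have pa: "\<alpha> permutes {0..<2*n}" using assms Sym_iff by auto
  let ?a = "restrict id {0..<n}" and ?i = "restrict id {0..<2*n}"
  have "?a \<in> AF n Nf" using assms by (auto simp: AF_def)
  moreover have "?i \<in> IC n Nc" using assms by (auto simp: IC_def)
  moreover have "Mon n \<alpha> ?a ?i = Rm n \<alpha>"
    unfolding Mon_def Rm_def
  proof (rule sum.cong)
    fix k assume "k \<in> {..<2*n}"
    hence k: "k < 2*n" by simp
    hence "\<alpha> k < 2*n" using pa by (metis atLeastLessThan_iff permutes_in_image zero_le)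
    moreover have "k div 2 < n" using k by simp
    ultimately show "Poly_Mapping.single (?a (k div 2), ?i k, ?i (\<alpha> k)) 1 = Poly_Mapping.single (k div 2, k, \<alpha> k) 1"
      using k by simp
  qed simp
  ultimately show ?thesis using lk_mesonic_nz by blast
qed

lemma coeff_orb:
  assumes "\<alpha> \<in> Sym (2*n)" "\<beta> \<in> Sym (2*n)" "lk (mesonic n Nf Nc \<beta>) (Rm n \<alpha>) \<noteq> 0"
  shows "\<beta> \<in> orb n \<alpha>"
  using assms lk_mesonic_nz mon_orb by metis

section \<open>Invariance under conjugation by H\<close>

lemma PiE_perm_bij:
  assumes p: "p permutes A"
  shows "bij_betw (\<lambda>a. restrict (a \<circ> p) A) (PiE A (\<lambda>_. B)) (PiE A (\<lambda>_. B))"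
proof (rule bij_betw_byWitness[where f'="\<lambda>a. restrict (a \<circ> inv p) A"])
  have inA: "x \<in> A \<Longrightarrow> p x \<in> A" "x \<in> A \<Longrightarrow> inv p x \<in> A" for x
    using p permutes_in_image permutes_inv by (metis, metis)
  have pi: "p (inv p x) = x" "inv p (p x) = x" for x
    using p permutes_inverses by metis+
  show "\<forall>a\<in>PiE A (\<lambda>_. B). restrict (restrict (a \<circ> p) A \<circ> inv p) A = a"
    by (auto simp: fun_eq_iff inA pi PiE_def extensional_def)
  show "\<forall>a\<in>PiE A (\<lambda>_. B). restrict (restrict (a \<circ> inv p) A \<circ> p) A = a"
    by (auto simp: fun_eq_iff inA pi PiE_def extensional_def)
  show "(\<lambda>a. restrict (a \<circ> p) A) ` PiE A (\<lambda>_. B) \<subseteq> PiE A (\<lambda>_. B)"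
    using inA by auto
  show "(\<lambda>a. restrict (a \<circ> inv p) A) ` PiE A (\<lambda>_. B) \<subseteq> PiE A (\<lambda>_. B)"
    using inA by auto
qed

definition piH :: "nat \<Rightarrow> (nat \<Rightarrow> nat) \<Rightarrow> nat \<Rightarrow> nat" where
  "piH n \<gamma> m = (if m < n then \<gamma> (2*m) div 2 else m)"

lemma H_lt: "\<gamma> \<in> Hgrp n \<Longrightarrow> k < 2*n \<Longrightarrow> \<gamma> k < 2*n"
  using H_perm by (metis atLeastLessThan_iff permutes_in_image zero_le)

lemma piH_perm:
  assumes g: "\<gamma> \<in> Hgrp n"
  shows "piH n \<gamma> permutes {0..<n}"
proof (rule bij_imp_permutes)
  have pg: "\<gamma> permutes {0..<2*n}" using g H_perm by blast
  have into: "piH n \<gamma> ` {0..<n} \<subseteq> {0..<n}"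
    using H_lt[OF g] by (auto simp: piH_def) (metis less_mult_imp_div_less mult.commute mult_less_mono2 zero_less_numeral)
  have inj: "inj_on (piH n \<gamma>) {0..<n}"
  proof
    fix m m' assume m: "m \<in> {0..<n}" and m': "m' \<in> {0..<n}" and e: "piH n \<gamma> m = piH n \<gamma> m'"
    have l: "2*m < 2*n" "2*m' < 2*n" using m m' by auto
    have d: "\<gamma> (2*m) div 2 = \<gamma> (2*m') div 2" using e m m' by (simp add: piH_def)
    have "\<gamma> (2*m) = \<gamma> (2*m')"
    proof (rule ccontr)
      assume ne: "\<gamma> (2*m) \<noteq> \<gamma> (2*m')"
      have "\<gamma> (2*m') = Sigma0 n (\<gamma> (2*m))"
        using pair_unique[OF H_lt[OF g l(1)] H_lt[OF g l(2)] d ne] .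
      also have "\<dots> = \<gamma> (Sigma0 n (2*m))" using H_comm[OF g] by simp
      finally have "2*m' = Sigma0 n (2*m)" using pg by (metis permutes_inverses(2))
      thus False using l(1) by (simp add: Sigma0_def) presburger
    qed
    hence "2*m = 2*m'" using pg by (metis permutes_inverses(2))
    thus "m = m'" by simp
  qed
  show "bij_betw (piH n \<gamma>) {0..<n} {0..<n}"
    unfolding bij_betw_def using inj into endo_inj_surj by blast
  show "\<And>x. x \<notin> {0..<n} \<Longrightarrow> piH n \<gamma> x = x" by (simp add: piH_def)
qed

lemma piH_div:
  assumes g: "\<gamma> \<in> Hgrp n" and k: "k < 2*n"
  shows "piH n \<gamma> (k div 2) = \<gamma> k div 2"
proof -
  have "k div 2 < n" using k by simp
  hence "piH n \<gamma> (k div 2) = \<gamma> (2*(k div 2)) div 2" by (simp add: piH_def)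
  also have "\<dots> = \<gamma> k div 2"
    using div_rep[OF k] H_comm[OF g] S0_div by metis
  finally show ?thesis .
qed

lemma Pm_conj:
  assumes g: "\<gamma> \<in> Hgrp n" and a: "\<alpha> \<in> Sym (2*n)"
  shows "Pm n (\<gamma> \<circ> \<alpha> \<circ> inv \<gamma>) a i =
         Pm n \<alpha> (restrict (a \<circ> piH n \<gamma>) {0..<n}) (restrict (i \<circ> \<gamma>) {0..<2*n})"
proof -
  let ?\<beta> = "\<gamma> \<circ> \<alpha> \<circ> inv \<gamma>"
  have pa: "\<alpha> permutes {0..<2*n}" using a Sym_iff by auto
  have pg: "\<gamma> permutes {0..<2*n}" using g H_perm by blast
  have bij: "bij_betw \<gamma> {..<2*n} {..<2*n}"
    using permutes_imp_bij[OF pg] by (simp add: atLeast0LessThan)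
  have "Pm n \<alpha> (restrict (a \<circ> piH n \<gamma>) {0..<n}) (restrict (i \<circ> \<gamma>) {0..<2*n})
      = (\<Prod>k<2*n. Xvar (a (\<gamma> k div 2), i (\<gamma> k), i (?\<beta> (\<gamma> k))))"
    unfolding Pm_def
  proof (rule prod.cong)
    fix k assume "k \<in> {..<2*n}"
    hence k: "k < 2*n" by simp
    have ak: "\<alpha> k < 2*n" using pa k by (metis atLeastLessThan_iff permutes_in_image zero_le)
    have kd: "k div 2 < n" using k by simp
    have "?\<beta> (\<gamma> k) = \<gamma> (\<alpha> k)" using pg by (simp add: permutes_inverses(2))
    thus "Xvar (restrict (a \<circ> piH n \<gamma>) {0..<n} (k div 2), restrict (i \<circ> \<gamma>) {0..<2*n} k,
               restrict (i \<circ> \<gamma>) {0..<2*n} (\<alpha> k))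
        = Xvar (a (\<gamma> k div 2), i (\<gamma> k), i (?\<beta> (\<gamma> k)))"
      using k ak kd piH_div[OF g k] by simp
  qed simp
  also have "\<dots> = Pm n ?\<beta> a i"
    unfolding Pm_def
    by (rule prod.reindex_bij_betw[OF bij, where g="\<lambda>k. Xvar (a (k div 2), i k, i (?\<beta> k))"])
  finally show ?thesis by simp
qed

lemma mesonic_conj:
  assumes g: "\<gamma> \<in> Hgrp n" and a: "\<alpha> \<in> Sym (2*n)"
  shows "mesonic n Nf Nc (\<gamma> \<circ> \<alpha> \<circ> inv \<gamma>) = mesonic n Nf Nc \<alpha>"
proof -
  have pg: "\<gamma> permutes {0..<2*n}" using g H_perm by blast
  have bi: "bij_betw (\<lambda>i. restrict (i \<circ> \<gamma>) {0..<2*n}) (IC n Nc) (IC n Nc)"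
    unfolding IC_def by (rule PiE_perm_bij[OF pg])
  have ba: "bij_betw (\<lambda>a. restrict (a \<circ> piH n \<gamma>) {0..<n}) (AF n Nf) (AF n Nf)"
    unfolding AF_def by (rule PiE_perm_bij[OF piH_perm[OF g]])
  have "mesonic n Nf Nc (\<gamma> \<circ> \<alpha> \<circ> inv \<gamma>)
      = (\<Sum>a\<in>AF n Nf. \<Sum>i\<in>IC n Nc. Pm n \<alpha> (restrict (a \<circ> piH n \<gamma>) {0..<n}) (restrict (i \<circ> \<gamma>) {0..<2*n}))"
    by (simp add: mesonic_Pm Pm_conj[OF g a])
  also have "\<dots> = (\<Sum>a\<in>AF n Nf. \<Sum>i\<in>IC n Nc. Pm n \<alpha> (restrict (a \<circ> piH n \<gamma>) {0..<n}) i)"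
    by (rule sum.cong[OF refl], rule sum.reindex_bij_betw[OF bi])
  also have "\<dots> = (\<Sum>a\<in>AF n Nf. \<Sum>i\<in>IC n Nc. Pm n \<alpha> a i)"
    by (rule sum.reindex_bij_betw[OF ba, where g="\<lambda>a. \<Sum>i\<in>IC n Nc. Pm n \<alpha> a i"])
  finally show ?thesis by (simp add: mesonic_Pm)
qed

lemma mesonic_eq_iff:
  assumes "n \<le> Nf" "2*n \<le> Nc" "\<alpha> \<in> Sym (2*n)" "\<beta> \<in> Sym (2*n)"
  shows "mesonic n Nf Nc \<alpha> = mesonic n Nf Nc \<beta> \<longleftrightarrow> orb n \<alpha> = orb n \<beta>"
proof
  assume e: "mesonic n Nf Nc \<alpha> = mesonic n Nf Nc \<beta>"
  have "lk (mesonic n Nf Nc \<beta>) (Rm n \<alpha>) \<noteq> 0" using mon_witness[OF assms(1-3)] e by simp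
  hence "\<beta> \<in> orb n \<alpha>" using coeff_orb assms by blast
  thus "orb n \<alpha> = orb n \<beta>" using orb_eq by metis
next
  assume "orb n \<alpha> = orb n \<beta>"
  hence "\<beta> \<in> orb n \<alpha>" using orb_self by metis
  then obtain \<gamma> where "\<gamma> \<in> Hgrp n" "\<beta> = \<gamma> \<circ> \<alpha> \<circ> inv \<gamma>" unfolding orb_def by blast
  thus "mesonic n Nf Nc \<alpha> = mesonic n Nf Nc \<beta>" using mesonic_conj assms by metis
qed

lemma card_image_rel:
  assumes fin: "finite A" and r: "\<And>x y. x \<in> A \<Longrightarrow> y \<in> A \<Longrightarrow> f x = f y \<longleftrightarrow> g x = g y"
  shows "card (f ` A) = card (g ` A)"
proof -
  define h where "h z = f (SOME x. x \<in> A \<and> g x = z)" for z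
  have hg: "h (g x) = f x" if x: "x \<in> A" for x
  proof -
    have "\<exists>x'. x' \<in> A \<and> g x' = g x" using x by blast
    hence "(SOME x'. x' \<in> A \<and> g x' = g x) \<in> A \<and> g (SOME x'. x' \<in> A \<and> g x' = g x) = g x"
      by (rule someI_ex)
    thus ?thesis unfolding h_def using r x by blast
  qed
  have "f ` A = h ` (g ` A)" using hg by (auto simp: image_iff)
  moreover have "inj_on h (g ` A)"
    by (rule inj_onI) (auto simp: hg r)
  ultimately show ?thesis by (simp add: card_image)
qed

lemma independent_mesonic:
  assumes "n \<le> Nf" "2*n \<le> Nc"
  shows "\<not> cs.dependent (mesonic n Nf Nc ` Sym (2*n))"
proof
  assume "cs.dependent (mesonic n Nf Nc ` Sym (2*n))"
  then obtain t u v where t: "finite t" "t \<subseteq> mesonic n Nf Nc ` Sym (2*n)"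
    and s: "(\<Sum>v\<in>t. cscale (u v) v) = 0" and v: "v \<in> t" "u v \<noteq> 0"
    unfolding cs.dependent_explicit by blast
  have "v \<in> mesonic n Nf Nc ` Sym (2*n)" using t(2) v(1) by (rule subsetD)
  then obtain \<alpha> where a2: "v = mesonic n Nf Nc \<alpha>" and a1: "\<alpha> \<in> Sym (2*n)" by (rule imageE)
  note a = a1 a2
  have "0 = lk (\<Sum>w\<in>t. cscale (u w) w) (Rm n \<alpha>)" using s by simp
  also have "\<dots> = (\<Sum>w\<in>t. u w * lk w (Rm n \<alpha>))" by (simp add: lookup_sum)
  also have "\<dots> = (\<Sum>w\<in>{v}. u w * lk w (Rm n \<alpha>))"
  proof (rule sum.mono_neutral_right[OF t(1)])
    show "{v} \<subseteq> t" using v by simp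
    show "\<forall>w\<in>t - {v}. u w * lk w (Rm n \<alpha>) = 0"
    proof
      fix w assume w: "w \<in> t - {v}"
      hence "w \<in> mesonic n Nf Nc ` Sym (2*n)" using t(2) by auto
      then obtain \<beta> where b2: "w = mesonic n Nf Nc \<beta>" and b1: "\<beta> \<in> Sym (2*n)" by (rule imageE)
      note b = b1 b2
      show "u w * lk w (Rm n \<alpha>) = 0"
      proof (rule ccontr)
        assume "u w * lk w (Rm n \<alpha>) \<noteq> 0"
        hence "lk (mesonic n Nf Nc \<beta>) (Rm n \<alpha>) \<noteq> 0" using b by simp
        hence "\<beta> \<in> orb n \<alpha>" using coeff_orb[OF a(1) b(1)] b by simp
        hence "orb n \<beta> = orb n \<alpha>" by (rule orb_eq)
        hence "mesonic n Nf Nc \<beta> = mesonic n Nf Nc \<alpha>" using mesonic_eq_iff[OF assms b(1) a(1)] by simp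
        hence "w = v" using a b by simp
        thus False using w by simp
      qed
    qed
  qed
  also have "\<dots> = u v * lk v (Rm n \<alpha>)" by simp
  finally have "u v * lk v (Rm n \<alpha>) = 0" by simp
  moreover have "lk v (Rm n \<alpha>) \<noteq> 0" using mon_witness[OF assms a(1)] a by simp
  ultimately show False using v by simp
qed

lemma span_dim_orbits:
  assumes "n \<le> Nf" "2*n \<le> Nc"
  shows "span_dim (mesonic n Nf Nc ` Sym (2*n)) = card (orb n ` Sym (2*n))"
proof -
  have "span_dim (mesonic n Nf Nc ` Sym (2*n)) = card (mesonic n Nf Nc ` Sym (2*n))"
    unfolding span_dim_def using cs.dim_eq_card_independent[OF independent_mesonic[OF assms]] by simp
  also have "\<dots> = card (orb n ` Sym (2*n))"
    by (rule card_image_rel[OF finite_Sym]) (rule mesonic_eq_iff[OF assms])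
  finally show ?thesis .
qed

lemma orb_fun: "(\<lambda>\<alpha>. {\<gamma> \<circ> \<alpha> \<circ> inv \<gamma> | \<gamma>. \<gamma> \<in> Hgrp n}) = orb n"
  by (simp add: orb_def fun_eq_iff)

theorem mainTheorem7:
  fixes n Nc Nf :: nat
  assumes "n \<ge> 1" and "Nc \<ge> 2*n" and "Nf \<ge> 2*n"
  shows "real (span_dim (mesonic n Nf Nc ` Sym (2*n)))
           = (1 / real (card (Hgrp n))) *
               (\<Sum>\<gamma>\<in>Hgrp n. \<Sum>\<alpha>\<in>Sym (2*n). delta (\<gamma> \<circ> \<alpha> \<circ> inv \<gamma> \<circ> inv \<alpha>))
       \<and> (1 / real (card (Hgrp n))) *
               (\<Sum>\<gamma>\<in>Hgrp n. \<Sum>\<alpha>\<in>Sym (2*n). delta (\<gamma> \<circ> \<alpha> \<circ> inv \<gamma> \<circ> inv \<alpha>))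
           = (1 / real (card (Hgrp n))) *
               (\<Sum>\<sigma>\<in>Sym (2*n). \<Sum>\<gamma>\<in>Sym (2*n).
                  delta (\<gamma> \<circ> \<sigma> \<circ> inv \<gamma> \<circ> inv \<sigma>) *
                  delta (Sigma0 n \<circ> \<gamma> \<circ> Sigma0 n \<circ> inv \<gamma>))
       \<and> span_dim (mesonic n Nf Nc ` Sym (2*n))
           = card ((\<lambda>\<alpha>. {\<gamma> \<circ> \<alpha> \<circ> inv \<gamma> | \<gamma>. \<gamma> \<in> Hgrp n}) ` Sym (2*n))"
proof -
  have a: "n \<le> Nf" "2*n \<le> Nc" using assms by auto
  show ?thesis
  proof (intro conjI)
    show "real (span_dim (mesonic n Nf Nc ` Sym (2*n)))
           = (1 / real (card (Hgrp n))) *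
               (\<Sum>\<gamma>\<in>Hgrp n. \<Sum>\<alpha>\<in>Sym (2*n). delta (\<gamma> \<circ> \<alpha> \<circ> inv \<gamma> \<circ> inv \<alpha>))"
      by (simp only: span_dim_orbits[OF a] burnside)
    show "(1 / real (card (Hgrp n))) *
               (\<Sum>\<gamma>\<in>Hgrp n. \<Sum>\<alpha>\<in>Sym (2*n). delta (\<gamma> \<circ> \<alpha> \<circ> inv \<gamma> \<circ> inv \<alpha>))
           = (1 / real (card (Hgrp n))) *
               (\<Sum>\<sigma>\<in>Sym (2*n). \<Sum>\<gamma>\<in>Sym (2*n).
                  delta (\<gamma> \<circ> \<sigma> \<circ> inv \<gamma> \<circ> inv \<sigma>) *
                  delta (Sigma0 n \<circ> \<gamma> \<circ> Sigma0 n \<circ> inv \<gamma>))"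
      by (rule second_eq)
    show "span_dim (mesonic n Nf Nc ` Sym (2*n))
           = card ((\<lambda>\<alpha>. {\<gamma> \<circ> \<alpha> \<circ> inv \<gamma> | \<gamma>. \<gamma> \<in> Hgrp n}) ` Sym (2*n))"
      unfolding orb_fun by (rule span_dim_orbits[OF a])
  qed
qed

end
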